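(* Let $p_{\mathcal I}$ denote the depth of the cluster tree $\mathcal T_{\mathcal I}$. Then $$W_{\rm mm}(t_0,s_0,r_0)\le C_{\rm mm}k^2(p_{\mathcal I}+1)(\#\hat t_0+\#\hat s_0+\#\hat r_0)\quad\text{for all }(t_0,s_0,r_0)\in\mathcal T_{\mathcal I\times\mathcal I\times\mathcal I},$$ with $C_{\rm mm}:=C_{\rm sp}^2C_{\rm mb}$.
   Context: $\mathcal T_{\mathcal I}$ is a binary cluster tree for a finite index set $\mathcal I$ (every cluster $t$ has a label $\hat t\subseteq\mathcal I$, the root has label $\mathcal I$, every non-leaf cluster has exactly two sons whose labels disjointly partition $\hat t$). $\mathcal T_{\mathcal I\times\mathcal I}$ is a block tree: its nodes are pairs $(t,s)$ of clusters, its root is the pair of roots, and a non-leaf block $(t,s)$ has sons $\mathrm{sons}^+(t)\times\mathrm{sons}^+(s)$, where $\mathrm{sons}^+(t)=\mathrm{sons}(t)$ if $t$ is not a leaf and $\mathrm{sons}^+(t)=\{t\}$ otherwise. $C_{\rm sp}$ is the sparsity constant: for each cluster $t$, at most $C_{\rm sp}$ clusters $s$ satisfy $(t,s)\in\mathcal T_{\mathcal I\times\mathcal I}$, and at most $C_{\rm sp}$ clusters $s$ satisfy $(s,t)\in\mathcal T_{\mathcal I\times\mathcal I}$. Matrices are $\mathcal H^2$-matrices of local rank $k$ on this block tree. $W_{\rm mm}(t,s,r)$, for $(t,s),(s,r)\in\mathcal T_{\mathcal I\times\mathcal I}$, is the number of operations of the recursive algorithm performing $Z|_{\hat t\times\hat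 r}\gets Z|_{\hat t\times\hat r}+X|_{\hat t\times\hat s}Y|_{\hat s\times\hat r}$: if neither $(t,s)$ nor $(s,r)$ is a leaf, it recurses over all $(t',s',r')\in\mathrm{sons}^+(t)\times\mathrm{sons}^+(s)\times\mathrm{sons}^+(r)$ (if $(t,r)$ is a leaf, the results go into temporary submatrices that are then added to $Z|_{\hat t\times\hat r}$ by local low-rank updates); otherwise the product is a low-rank matrix computed in factorized form and added by a local low-rank update. The triple tree $\mathcal T_{\mathcal I\times\mathcal I\times\mathcal I}$ has root (root,root,root); a triple $(t,s,r)$ with $(t,s)$ and $(s,r)$ both non-leaves has sons $\mathrm{sons}^+(t)\times\mathrm{sons}^+(s)\times\mathrm{sons}^+(r)$, and otherwise no sons. $C_{\rm mb}$ is a constant such that $W_{\rm mm}(t,s,r)\le C_{\rm mb}k^2(\#\hat t+\#\hat s+\#\hat r)$ if $(t,s)$ or $(s,r)$ is a leaf, and $W_{\rm mm}(t,s,r)\le C_{\rm mb}k^2(\#\hat t+\#\hat s+\#\hat r)+\sum_{t'\in\mathrm{sons}^+(t),s'\in\mathrm{sons}^+(s),r'\in\mathrm{sons}^+(r)}W_{\rm mm}(t',s',r')$ otherwise. *)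

theory Defs
  imports Complex_Main
begin

inductive_set clusters :: "'c \<Rightarrow> ('c \<Rightarrow> 'c set) \<Rightarrow> 'c set"
  for rt :: 'c and sons :: "'c \<Rightarrow> 'c set" where
  rootI: "rt \<in> clusters rt sons"
| son: "t \<in> clusters rt sons \<Longrightarrow> t' \<in> sons t \<Longrightarrow> t' \<in> clusters rt sons"

definition is_binary_cluster_tree ::
  "'i set \<Rightarrow> 'c \<Rightarrow> ('c \<Rightarrow> 'c set) \<Rightarrow> ('c \<Rightarrow> 'i set) \<Rightarrow> bool" where
  "is_binary_cluster_tree I rt sons label \<longleftrightarrow>
     finite I \<and> label rt = I \<and>
     finite (clusters rt sons) \<and>
     (\<forall>t\<in>clusters rt sons. rt \<notin> sons t) \<and>
     (\<forall>t1\<in>clusters rt sons. \<forall>t2\<in>clusters rt sons. t1 \<noteq> t2 \<longrightarrow> sons t1 \<inter> sons t2 = {}) \<and>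
     (\<forall>t\<in>clusters rt sons. sons t = {} \<or>
        (\<exists>a b. a \<noteq> b \<and> sons t = {a, b} \<and> label a \<inter> label b = {} \<and> label a \<union> label b = label t))"

inductive cluster_level :: "'c \<Rightarrow> ('c \<Rightarrow> 'c set) \<Rightarrow> 'c \<Rightarrow> nat \<Rightarrow> bool"
  for rt :: 'c and sons :: "'c \<Rightarrow> 'c set" where
  rootI: "cluster_level rt sons rt 0"
| son: "cluster_level rt sons t n \<Longrightarrow> t' \<in> sons t \<Longrightarrow> cluster_level rt sons t' (Suc n)"

definition cluster_depth :: "'c \<Rightarrow> ('c \<Rightarrow> 'c set) \<Rightarrow> nat" where
  "cluster_depth rt sons = Max {n. \<exists>t. cluster_level rt sons t n}"

definition sonsp :: "('c \<Rightarrow> 'c set) \<Rightarrow> 'c \<Rightarrow> 'c set" where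
  "sonsp sons t = (if sons t = {} then {t} else sons t)"

inductive_set blocks :: "'c \<Rightarrow> ('c \<Rightarrow> 'c set) \<Rightarrow> ('c \<times> 'c \<Rightarrow> bool) \<Rightarrow> ('c \<times> 'c) set"
  for rt :: 'c and sons :: "'c \<Rightarrow> 'c set" and bleaf :: "'c \<times> 'c \<Rightarrow> bool" where
  rootI: "(rt, rt) \<in> blocks rt sons bleaf"
| son: "(t, s) \<in> blocks rt sons bleaf \<Longrightarrow> \<not> bleaf (t, s) \<Longrightarrow>
        t' \<in> sonsp sons t \<Longrightarrow> s' \<in> sonsp sons s \<Longrightarrow> (t', s') \<in> blocks rt sons bleaf"

definition is_block_tree :: "'c \<Rightarrow> ('c \<Rightarrow> 'c set) \<Rightarrow> ('c \<times> 'c \<Rightarrow> bool) \<Rightarrow> bool" where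
  "is_block_tree rt sons bleaf \<longleftrightarrow>
     (\<forall>(t, s)\<in>blocks rt sons bleaf. sons t = {} \<and> sons s = {} \<longrightarrow> bleaf (t, s))"

inductive_set triples :: "'c \<Rightarrow> ('c \<Rightarrow> 'c set) \<Rightarrow> ('c \<times> 'c \<Rightarrow> bool) \<Rightarrow> ('c \<times> 'c \<times> 'c) set"
  for rt :: 'c and sons :: "'c \<Rightarrow> 'c set" and bleaf :: "'c \<times> 'c \<Rightarrow> bool" where
  rootI: "(rt, rt, rt) \<in> triples rt sons bleaf"
| son: "(t, s, r) \<in> triples rt sons bleaf \<Longrightarrow> \<not> bleaf (t, s) \<Longrightarrow> \<not> bleaf (s, r) \<Longrightarrow>
        t' \<in> sonsp sons t \<Longrightarrow> s' \<in> sonsp sons s \<Longrightarrow> r' \<in> sonsp sons r \<Longrightarrow>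
        (t', s', r') \<in> triples rt sons bleaf"

end

theory Submission
  imports Defs
begin


lemma sum_UN_le_nat:
  fixes f :: "'a \<Rightarrow> nat"
  assumes "finite A" "\<forall>a\<in>A. finite (B a)"
  shows "sum f (\<Union>(B ` A)) \<le> (\<Sum>a\<in>A. sum f (B a))"
  using assms
proof (induction A rule: finite_induct)
  case empty then show ?case by simp
next
  case (insert a A)
  have "sum f (\<Union>(B ` insert a A)) = sum f (B a \<union> \<Union>(B ` A))" by simp
  also have "\<dots> \<le> sum f (B a) + sum f (\<Union>(B ` A))"
    using insert by (simp add: sum_Un_nat)
  also have "\<dots> \<le> sum f (B a) + (\<Sum>a\<in>A. sum f (B a))" using insert by simp
  finally show ?case using insert by simp
qed

lemma fiber_sum:
  fixes g :: "'b \<Rightarrow> nat"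
  assumes "finite S" "\<And>y. y \<in> h ` S \<Longrightarrow> card {x. x \<in> S \<and> h x = y} \<le> K"
  shows "(\<Sum>x\<in>S. g (h x)) \<le> K * (\<Sum>y\<in>h ` S. g y)"
proof -
  have "(\<Sum>x\<in>S. g (h x)) = (\<Sum>y\<in>h ` S. \<Sum>x\<in>{x. x \<in> S \<and> h x = y}. g (h x))"
    using sum.image_gen[OF assms(1)] by blast
  also have "\<dots> = (\<Sum>y\<in>h ` S. g y * card {x. x \<in> S \<and> h x = y})"
    by (intro sum.cong refl) simp
  also have "\<dots> \<le> (\<Sum>y\<in>h ` S. g y * K)"
    by (intro sum_mono mult_le_mono2 assms(2))
  finally show ?thesis by (simp add: sum_distrib_left mult.commute)
qed

inductive tat :: "'c \<Rightarrow> ('c \<Rightarrow> 'c set) \<Rightarrow> ('c \<times> 'c \<Rightarrow> bool) \<Rightarrow> nat \<Rightarrow> 'c \<times> 'c \<times> 'c \<Rightarrow> bool"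
  for rt sons bleaf where
  t0: "tat rt sons bleaf 0 (rt, rt, rt)"
| tS: "tat rt sons bleaf n (t, s, r) \<Longrightarrow> \<not> bleaf (t, s) \<Longrightarrow> \<not> bleaf (s, r) \<Longrightarrow>
        t' \<in> sonsp sons t \<Longrightarrow> s' \<in> sonsp sons s \<Longrightarrow> r' \<in> sonsp sons r \<Longrightarrow>
        tat rt sons bleaf (Suc n) (t', s', r')"

definition ch :: "('c \<Rightarrow> 'c set) \<Rightarrow> ('c \<times> 'c \<Rightarrow> bool) \<Rightarrow> 'c \<times> 'c \<times> 'c \<Rightarrow> ('c \<times> 'c \<times> 'c) set" where
  "ch sons bleaf x = (case x of (t, s, r) \<Rightarrow>
     if \<not> bleaf (t, s) \<and> \<not> bleaf (s, r) then sonsp sons t \<times> sonsp sons s \<times> sonsp sons r else {})"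

primrec SS :: "('c \<Rightarrow> 'c set) \<Rightarrow> ('c \<times> 'c \<Rightarrow> bool) \<Rightarrow> 'c \<times> 'c \<times> 'c \<Rightarrow> nat \<Rightarrow> ('c \<times> 'c \<times> 'c) set" where
  "SS sons bleaf x0 0 = {x0}"
| "SS sons bleaf x0 (Suc j) = \<Union>(ch sons bleaf ` SS sons bleaf x0 j)"

primrec DD :: "('c \<Rightarrow> 'c set) \<Rightarrow> 'c \<Rightarrow> nat \<Rightarrow> 'c set" where
  "DD sons t 0 = {t}"
| "DD sons t (Suc j) = \<Union>(sonsp sons ` DD sons t j)"

definition linv :: "'c \<Rightarrow> ('c \<Rightarrow> 'c set) \<Rightarrow> nat \<Rightarrow> 'c \<Rightarrow> bool" where
  "linv rt sons n u \<longleftrightarrow> (\<exists>m. cluster_level rt sons u m \<and> (m = n \<or> (sons u = {} \<and> m < n)))"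

locale L =
  fixes I :: "'i set" and rt :: 'c and sons :: "'c \<Rightarrow> 'c set" and label :: "'c \<Rightarrow> 'i set"
    and bleaf :: "'c \<times> 'c \<Rightarrow> bool"
  assumes ct: "is_binary_cluster_tree I rt sons label"
    and bt: "is_block_tree rt sons bleaf"
begin

abbreviation "C \<equiv> clusters rt sons"
abbreviation "B \<equiv> blocks rt sons bleaf"
abbreviation "T \<equiv> triples rt sons bleaf"

lemma finC: "finite C" using ct unfolding is_binary_cluster_tree_def by blast
lemma finI: "finite I" using ct unfolding is_binary_cluster_tree_def by blast

lemma sonsp_sub: "t \<in> C \<Longrightarrow> sonsp sons t \<subseteq> C"
  unfolding sonsp_def by (auto intro: clusters.son)

lemma fin_sonsp: "t \<in> C \<Longrightarrow> finite (sonsp sons t)"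
  using sonsp_sub finC finite_subset by blast

lemma label_sub: "t \<in> C \<Longrightarrow> label t \<subseteq> I"
proof (induction rule: clusters.induct)
  case rootI then show ?case using ct unfolding is_binary_cluster_tree_def by simp
next
  case (son t t')
  then obtain a b where "sons t = {a, b}" "label a \<union> label b = label t"
    using ct unfolding is_binary_cluster_tree_def by blast
  then show ?case using son by auto
qed

lemma sonsp_card: "t \<in> C \<Longrightarrow> (\<Sum>v\<in>sonsp sons t. card (label v)) = card (label t)"
proof (cases "sons t = {}")
  case True then show ?thesis by (simp add: sonsp_def)
next
  case False
  assume tC: "t \<in> C"
  then obtain a b where ab: "a \<noteq> b" "sons t = {a, b}" "label a \<inter> label b = {}" "label a \<union> label b = label t"
    using ct False unfolding is_binary_cluster_tree_def by blast
  have aC: "a \<in> C" "b \<in> C" using ab tC by (auto intro: clusters.son)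
  have fin: "finite (label a)" "finite (label b)"
    using label_sub[OF aC(1)] label_sub[OF aC(2)] finI finite_subset by blast+
  show ?thesis using False ab fin by (simp add: sonsp_def card_Un_disjoint[symmetric])
qed

lemma blocks_sub: "(t, s) \<in> B \<Longrightarrow> t \<in> C \<and> s \<in> C"
proof (induction rule: blocks.induct)
  case rootI then show ?case by (simp add: clusters.rootI)
next
  case (son t s t' s') then show ?case using sonsp_sub by blast
qed

lemma triples_blocks: "(t, s, r) \<in> T \<Longrightarrow> (t, s) \<in> B \<and> (s, r) \<in> B"
proof (induction rule: triples.induct)
  case rootI then show ?case by (simp add: blocks.rootI)
next
  case (son t s r t' s' r') then show ?case by (blast intro: blocks.son)
qed

lemma triples_C: "(t, s, r) \<in> T \<Longrightarrow> t \<in> C \<and> s \<in> C \<and> r \<in> C"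
  using triples_blocks blocks_sub by blast

lemma finT: "finite T"
proof -
  have "T \<subseteq> C \<times> C \<times> C" using triples_C by auto
  then show ?thesis using finC finite_subset by blast
qed

lemma level_C: "cluster_level rt sons t n \<Longrightarrow> t \<in> C"
  by (induction rule: cluster_level.induct) (auto intro: clusters.intros)

lemma root_not_son: "t \<in> C \<Longrightarrow> rt \<notin> sons t"
  using ct unfolding is_binary_cluster_tree_def by blast

lemma sons_disj: "t1 \<in> C \<Longrightarrow> t2 \<in> C \<Longrightarrow> t1 \<noteq> t2 \<Longrightarrow> sons t1 \<inter> sons t2 = {}"
  using ct unfolding is_binary_cluster_tree_def by blast

lemma level_unique: "cluster_level rt sons t n \<Longrightarrow> cluster_level rt sons t m \<Longrightarrow> n = m"
proof (induction arbitrary: m rule: cluster_level.induct)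
  case rootI
  then show ?case
  proof cases
    case rootI then show ?thesis by simp
  next
    case (son t n) then show ?thesis using level_C root_not_son by blast
  qed
next
  case (son t n t')
  note IH = son.IH
  from son.prems show ?case
  proof cases
    case rootI then show ?thesis using son.hyps level_C root_not_son by blast
  next
    case (son t2 n2)
    have "t = t2" using sons_disj level_C son.hyps \<open>t' \<in> sons t2\<close> \<open>cluster_level rt sons t2 n2\<close> by blast
    then show ?thesis using IH \<open>cluster_level rt sons t2 n2\<close> \<open>m = Suc n2\<close> by simp
  qed
qed

lemma level_le_depth: "cluster_level rt sons t n \<Longrightarrow> n \<le> cluster_depth rt sons"
proof -
  assume h: "cluster_level rt sons t n"
  have "{n. \<exists>t. cluster_level rt sons t n} \<subseteq> (\<lambda>t. THE n. cluster_level rt sons t n) ` C"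
  proof
    fix n assume "n \<in> {n. \<exists>t. cluster_level rt sons t n}"
    then obtain t where t: "cluster_level rt sons t n" by blast
    then have "(THE n. cluster_level rt sons t n) = n" using level_unique by blast
    then show "n \<in> (\<lambda>t. THE n. cluster_level rt sons t n) ` C" using level_C[OF t] by force
  qed
  then have "finite {n. \<exists>t. cluster_level rt sons t n}" using finC finite_subset by blast
  then show ?thesis unfolding cluster_depth_def using h by (intro Max_ge) auto
qed

lemma tat_T: "tat rt sons bleaf n x \<Longrightarrow> x \<in> T"
  by (induction rule: tat.induct) (auto intro: triples.intros)

lemma T_tat0: "(t, s, r) \<in> T \<Longrightarrow> \<exists>n. tat rt sons bleaf n (t, s, r)"
  by (induction rule: triples.induct) (auto intro: tat.intros)

lemma T_tat: "x \<in> T \<Longrightarrow> \<exists>n. tat rt sons bleaf n x"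
  using T_tat0 by (cases x) auto

lemma linv_step: "linv rt sons n u \<Longrightarrow> u' \<in> sonsp sons u \<Longrightarrow> linv rt sons (Suc n) u'"
  unfolding linv_def sonsp_def
  by (cases "sons u = {}") (auto intro: cluster_level.son)

lemma linv_nonleaf: "linv rt sons n u \<Longrightarrow> sons u \<noteq> {} \<Longrightarrow> u' \<in> sonsp sons u \<Longrightarrow>
   cluster_level rt sons u' (Suc n)"
  unfolding linv_def sonsp_def by (auto intro: cluster_level.son)

lemma tat_linv: "tat rt sons bleaf n (t, s, r) \<Longrightarrow> linv rt sons n t \<and> linv rt sons n s \<and> linv rt sons n r"
proof (induction n "(t, s, r)" arbitrary: t s r rule: tat.induct)
  case t0 then show ?case unfolding linv_def by (auto intro: cluster_level.rootI)
next
  case (tS n t s r t' s' r') then show ?case using linv_step by blast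
qed

lemma tat_depth: "tat rt sons bleaf n x \<Longrightarrow> n \<le> cluster_depth rt sons"
proof (induction rule: tat.induct)
  case t0 then show ?case by simp
next
  case (tS n t s r t' s' r')
  have "(t, s) \<in> B" using tat_T[OF tS.hyps(1)] triples_blocks by blast
  then have "sons t \<noteq> {} \<or> sons s \<noteq> {}" using bt tS.hyps(2) unfolding is_block_tree_def by blast
  then show ?case using linv_nonleaf tat_linv[OF tS.hyps(1)] tS.hyps level_le_depth by blast
qed

lemma comp_eq: "linv rt sons n u1 \<Longrightarrow> linv rt sons n u2 \<Longrightarrow> u1 \<in> C \<Longrightarrow> u2 \<in> C \<Longrightarrow>
   v \<in> sonsp sons u1 \<Longrightarrow> v \<in> sonsp sons u2 \<Longrightarrow> u1 = u2"
proof -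
  assume l1: "linv rt sons n u1" and l2: "linv rt sons n u2" and c: "u1 \<in> C" "u2 \<in> C"
    and v: "v \<in> sonsp sons u1" "v \<in> sonsp sons u2"
  have lem: False if h1: "linv rt sons n a" and "linv rt sons n b" "sons a = {}" "sons b \<noteq> {}" "a \<in> sons b" for a b
  proof -
    have "cluster_level rt sons a (Suc n)"
      using linv_nonleaf[OF that(2) that(4)] that(4,5) by (simp add: sonsp_def)
    moreover obtain m where "cluster_level rt sons a m" "m = n \<or> m < n" using h1 unfolding linv_def by blast
    ultimately have "Suc n = m" using level_unique by blast
    then show False using \<open>m = n \<or> m < n\<close> by simp
  qed
  show ?thesis
  proof (cases "sons u1 = {}"; cases "sons u2 = {}")
    assume "sons u1 = {}" "sons u2 = {}" then show ?thesis using v by (simp add: sonsp_def)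
  next
    assume "sons u1 = {}" "sons u2 \<noteq> {}" then show ?thesis using v lem[OF l1 l2] by (simp add: sonsp_def)
  next
    assume "sons u1 \<noteq> {}" "sons u2 = {}" then show ?thesis using v lem[OF l2 l1] by (simp add: sonsp_def)
  next
    assume "sons u1 \<noteq> {}" "sons u2 \<noteq> {}" then show ?thesis using v sons_disj c by (auto simp: sonsp_def)
  qed
qed

lemma ch_disj: "tat rt sons bleaf n x \<Longrightarrow> tat rt sons bleaf n y \<Longrightarrow> x \<noteq> y \<Longrightarrow>
   ch sons bleaf x \<inter> ch sons bleaf y = {}"
proof (rule ccontr)
  assume tx: "tat rt sons bleaf n x" and ty: "tat rt sons bleaf n y" and ne: "x \<noteq> y"
    and "ch sons bleaf x \<inter> ch sons bleaf y \<noteq> {}"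
  then obtain z where z: "z \<in> ch sons bleaf x" "z \<in> ch sons bleaf y" by blast
  obtain t1 s1 r1 where x: "x = (t1, s1, r1)" by (cases x) auto
  obtain t2 s2 r2 where y: "y = (t2, s2, r2)" by (cases y) auto
  obtain t' s' r' where zz: "z = (t', s', r')" by (cases z) auto
  have m1: "t' \<in> sonsp sons t1" "s' \<in> sonsp sons s1" "r' \<in> sonsp sons r1"
    using z(1) x zz by (auto simp: ch_def split: if_splits)
  have m2: "t' \<in> sonsp sons t2" "s' \<in> sonsp sons s2" "r' \<in> sonsp sons r2"
    using z(2) y zz by (auto simp: ch_def split: if_splits)
  have c1: "t1 \<in> C" "s1 \<in> C" "r1 \<in> C" using triples_C tat_T tx x by blast+
  have c2: "t2 \<in> C" "s2 \<in> C" "r2 \<in> C" using triples_C tat_T ty y by blast+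
  have l1: "linv rt sons n t1" "linv rt sons n s1" "linv rt sons n r1" using tat_linv tx x by blast+
  have l2: "linv rt sons n t2" "linv rt sons n s2" "linv rt sons n r2" using tat_linv ty y by blast+
  have "t1 = t2" using comp_eq[OF l1(1) l2(1) c1(1) c2(1) m1(1) m2(1)] .
  moreover have "s1 = s2" using comp_eq[OF l1(2) l2(2) c1(2) c2(2) m1(2) m2(2)] .
  moreover have "r1 = r2" using comp_eq[OF l1(3) l2(3) c1(3) c2(3) m1(3) m2(3)] .
  ultimately show False using ne x y by simp
qed

lemma SS_tat: "tat rt sons bleaf n x0 \<Longrightarrow> x \<in> SS sons bleaf x0 j \<Longrightarrow> tat rt sons bleaf (n + j) x"
proof (induction j arbitrary: x)
  case 0 then show ?case by simp
next
  case (Suc j)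
  then obtain y where y: "y \<in> SS sons bleaf x0 j" "x \<in> ch sons bleaf y" by auto
  then have ty: "tat rt sons bleaf (n + j) y" using Suc by blast
  obtain t s r where yy: "y = (t, s, r)" by (cases y) auto
  obtain t' s' r' where xx: "x = (t', s', r')" by (cases x) auto
  show ?case using y(2) ty yy xx by (auto simp: ch_def split: if_splits intro: tat.tS)
qed

lemma SS_T: "x0 \<in> T \<Longrightarrow> SS sons bleaf x0 j \<subseteq> T"
  using SS_tat T_tat tat_T by blast

lemma SS_fin: "x0 \<in> T \<Longrightarrow> finite (SS sons bleaf x0 j)"
  using SS_T finT finite_subset by blast

lemma ch_fin: "x \<in> T \<Longrightarrow> finite (ch sons bleaf x)"
proof -
  assume xT: "x \<in> T"
  obtain t s r where x: "x = (t, s, r)" by (cases x) auto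
  have c: "t \<in> C" "s \<in> C" "r \<in> C" using triples_C xT x by blast+
  have "ch sons bleaf x \<subseteq> sonsp sons t \<times> sonsp sons s \<times> sonsp sons r" using x by (auto simp: ch_def)
  then show ?thesis using fin_sonsp[OF c(1)] fin_sonsp[OF c(2)] fin_sonsp[OF c(3)] finite_subset by blast
qed

lemma DD_sum: "t \<in> C \<Longrightarrow> DD sons t j \<subseteq> C \<and> (\<Sum>u\<in>DD sons t j. card (label u)) \<le> card (label t)"
proof (induction j)
  case 0 then show ?case by simp
next
  case (Suc j)
  have fin: "finite (DD sons t j)" using Suc finC finite_subset by blast
  have sub: "DD sons t (Suc j) \<subseteq> C" using Suc sonsp_sub by auto
  have "(\<Sum>u\<in>DD sons t (Suc j). card (label u)) \<le> (\<Sum>a\<in>DD sons t j. \<Sum>u\<in>sonsp sons a. card (label u))"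
    using sum_UN_le_nat[OF fin] fin_sonsp Suc by auto
  also have "\<dots> = (\<Sum>a\<in>DD sons t j. card (label a))"
    using sonsp_card Suc by (intro sum.cong) auto
  finally show ?case using Suc sub by simp
qed

lemma SS_DD: "x \<in> SS sons bleaf (t0, s0, r0) j \<Longrightarrow>
   fst x \<in> DD sons t0 j \<and> fst (snd x) \<in> DD sons s0 j \<and> snd (snd x) \<in> DD sons r0 j"
proof (induction j arbitrary: x)
  case 0 then show ?case by simp
next
  case (Suc j)
  then obtain y where y: "y \<in> SS sons bleaf (t0, s0, r0) j" "x \<in> ch sons bleaf y" by auto
  obtain t s r where yy: "y = (t, s, r)" by (cases y) auto
  have "fst y \<in> DD sons t0 j \<and> fst (snd y) \<in> DD sons s0 j \<and> snd (snd y) \<in> DD sons r0 j"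
    using Suc y by blast
  then show ?case using y(2) yy by (auto simp: ch_def split: if_splits)
qed

lemma card_row: "t \<in> C \<Longrightarrow> finite {s. (t, s) \<in> B}"
  using blocks_sub finC by (auto intro: finite_subset[of _ C])
lemma card_col: "t \<in> C \<Longrightarrow> finite {s. (s, t) \<in> B}"
  using blocks_sub finC by (auto intro: finite_subset[of _ C])


lemma card_sigma_le:
  assumes "finite A" "card A \<le> K" "\<And>a. a \<in> A \<Longrightarrow> finite (Bs a) \<and> card (Bs a) \<le> K"
  shows "card (Sigma A Bs) \<le> K * K"
proof -
  have "card (Sigma A Bs) = (\<Sum>a\<in>A. card (Bs a))" using assms by simp
  also have "\<dots> \<le> card A * K" using assms(3) sum_bounded_above[of A "\<lambda>a. card (Bs a)" K] by simp
  also have "\<dots> \<le> K * K" using assms(2) by simp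
  finally show ?thesis .
qed

lemma level_bound:
  assumes sp_row: "\<And>t. t \<in> C \<Longrightarrow> card {s. (t, s) \<in> B} \<le> Csp"
    and sp_col: "\<And>t. t \<in> C \<Longrightarrow> card {s. (s, t) \<in> B} \<le> Csp"
    and x0: "(t0, s0, r0) \<in> T"
  shows "(\<Sum>x\<in>SS sons bleaf (t0, s0, r0) j. card (label (fst x)) + card (label (fst (snd x))) + card (label (snd (snd x))))
     \<le> Csp^2 * (card (label t0) + card (label s0) + card (label r0))"
proof -
  define S where "S = SS sons bleaf (t0, s0, r0) j"
  have finS: "finite S" using SS_fin x0 S_def by blast
  have ST: "S \<subseteq> T" using SS_T x0 S_def by blast
  have c0: "t0 \<in> C" "s0 \<in> C" "r0 \<in> C" using triples_C x0 by blast+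
  have DDfin: "\<And>u j. u \<in> C \<Longrightarrow> finite (DD sons u j)" using DD_sum finC finite_subset by blast
  have rowfin: "\<And>t. t \<in> C \<Longrightarrow> finite {s. (t, s) \<in> B} \<and> (\<forall>s\<in>{s. (t, s) \<in> B}. s \<in> C)"
    using card_row blocks_sub by blast
  have colfin: "\<And>t. t \<in> C \<Longrightarrow> finite {s. (s, t) \<in> B} \<and> (\<forall>s\<in>{s. (s, t) \<in> B}. s \<in> C)"
    using card_col blocks_sub by blast
  have A: "(\<Sum>x\<in>S. card (label (fst x))) \<le> Csp^2 * card (label t0)"
  proof -
    have "(\<Sum>x\<in>S. card (label (fst x))) \<le> (Csp * Csp) * (\<Sum>y\<in>fst ` S. card (label y))"
    proof (rule fiber_sum[OF finS])
      fix y assume y: "y \<in> fst ` S"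
      then have yC: "y \<in> C" using ST triples_C by force
      have sub: "{x. x \<in> S \<and> fst x = y} \<subseteq> (\<lambda>(s, r). (y, s, r)) ` (SIGMA s:{s. (y, s) \<in> B}. {r. (s, r) \<in> B})"
      proof
        fix x assume "x \<in> {x. x \<in> S \<and> fst x = y}"
        then obtain s r where "x = (y, s, r)" "(y, s, r) \<in> T" using ST by (cases x) auto
        then show "x \<in> (\<lambda>(s, r). (y, s, r)) ` (SIGMA s:{s. (y, s) \<in> B}. {r. (s, r) \<in> B})"
          using triples_blocks by force
      qed
      have "card (SIGMA s:{s. (y, s) \<in> B}. {r. (s, r) \<in> B}) \<le> Csp * Csp"
        using rowfin[OF yC] sp_row[OF yC] rowfin sp_row by (intro card_sigma_le) auto
      moreover have "finite (SIGMA s:{s. (y, s) \<in> B}. {r. (s, r) \<in> B})"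
        using rowfin[OF yC] rowfin by auto
      ultimately show "card {x. x \<in> S \<and> fst x = y} \<le> Csp * Csp"
        using sub card_image_le card_mono finite_imageI by (meson le_trans)
    qed
    also have "(\<Sum>y\<in>fst ` S. card (label y)) \<le> (\<Sum>y\<in>DD sons t0 j. card (label y))"
      using SS_DD S_def DDfin[OF c0(1)] by (intro sum_mono2) auto
    also have "\<dots> \<le> card (label t0)" using DD_sum c0 by blast
    finally show ?thesis by (simp add: power2_eq_square)
  qed
  have Bb: "(\<Sum>x\<in>S. card (label (fst (snd x)))) \<le> Csp^2 * card (label s0)"
  proof -
    have "(\<Sum>x\<in>S. card (label (fst (snd x)))) \<le> (Csp * Csp) * (\<Sum>y\<in>(\<lambda>x. fst (snd x)) ` S. card (label y))"
    proof (rule fiber_sum[OF finS])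
      fix y assume y: "y \<in> (\<lambda>x. fst (snd x)) ` S"
      then have yC: "y \<in> C" using ST triples_C by force
      have sub: "{x. x \<in> S \<and> fst (snd x) = y} \<subseteq> (\<lambda>(t, r). (t, y, r)) ` ({t. (t, y) \<in> B} \<times> {r. (y, r) \<in> B})"
      proof
        fix x assume "x \<in> {x. x \<in> S \<and> fst (snd x) = y}"
        then obtain t r where "x = (t, y, r)" "(t, y, r) \<in> T" using ST by (cases x) auto
        then show "x \<in> (\<lambda>(t, r). (t, y, r)) ` ({t. (t, y) \<in> B} \<times> {r. (y, r) \<in> B})"
          using triples_blocks by force
      qed
      have "card ({t. (t, y) \<in> B} \<times> {r. (y, r) \<in> B}) \<le> Csp * Csp"
        using sp_row[OF yC] sp_col[OF yC] by (simp add: card_cartesian_product mult_le_mono)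
      moreover have "finite ({t. (t, y) \<in> B} \<times> {r. (y, r) \<in> B})"
        using rowfin[OF yC] colfin[OF yC] by auto
      ultimately show "card {x. x \<in> S \<and> fst (snd x) = y} \<le> Csp * Csp"
        using sub card_image_le card_mono finite_imageI by (meson le_trans)
    qed
    also have "(\<Sum>y\<in>(\<lambda>x. fst (snd x)) ` S. card (label y)) \<le> (\<Sum>y\<in>DD sons s0 j. card (label y))"
      using SS_DD S_def DDfin[OF c0(2)] by (intro sum_mono2) auto
    also have "\<dots> \<le> card (label s0)" using DD_sum c0 by blast
    finally show ?thesis by (simp add: power2_eq_square)
  qed
  have Cc: "(\<Sum>x\<in>S. card (label (snd (snd x)))) \<le> Csp^2 * card (label r0)"
  proof -
    have "(\<Sum>x\<in>S. card (label (snd (snd x)))) \<le> (Csp * Csp) * (\<Sum>y\<in>(\<lambda>x. snd (snd x)) ` S. card (label y))"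
    proof (rule fiber_sum[OF finS])
      fix y assume y: "y \<in> (\<lambda>x. snd (snd x)) ` S"
      then have yC: "y \<in> C" using ST triples_C by force
      have sub: "{x. x \<in> S \<and> snd (snd x) = y} \<subseteq> (\<lambda>(s, t). (t, s, y)) ` (SIGMA s:{s. (s, y) \<in> B}. {t. (t, s) \<in> B})"
      proof
        fix x assume "x \<in> {x. x \<in> S \<and> snd (snd x) = y}"
        then obtain t s where "x = (t, s, y)" "(t, s, y) \<in> T" using ST by (cases x) auto
        then show "x \<in> (\<lambda>(s, t). (t, s, y)) ` (SIGMA s:{s. (s, y) \<in> B}. {t. (t, s) \<in> B})"
          using triples_blocks by force
      qed
      have "card (SIGMA s:{s. (s, y) \<in> B}. {t. (t, s) \<in> B}) \<le> Csp * Csp"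
        using colfin[OF yC] sp_col[OF yC] colfin sp_col by (intro card_sigma_le) auto
      moreover have "finite (SIGMA s:{s. (s, y) \<in> B}. {t. (t, s) \<in> B})"
        using colfin[OF yC] colfin by auto
      ultimately show "card {x. x \<in> S \<and> snd (snd x) = y} \<le> Csp * Csp"
        using sub card_image_le card_mono finite_imageI by (meson le_trans)
    qed
    also have "(\<Sum>y\<in>(\<lambda>x. snd (snd x)) ` S. card (label y)) \<le> (\<Sum>y\<in>DD sons r0 j. card (label y))"
      using SS_DD S_def DDfin[OF c0(3)] by (intro sum_mono2) auto
    also have "\<dots> \<le> card (label r0)" using DD_sum c0 by blast
    finally show ?thesis by (simp add: power2_eq_square)
  qed
  show ?thesis using A Bb Cc unfolding S_def[symmetric] by (simp add: sum.distrib algebra_simps)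
qed

end

theorem mainTheorem2:
  fixes I :: "'i set" and rt :: 'c and sons :: "'c \<Rightarrow> 'c set" and label :: "'c \<Rightarrow> 'i set"
    and bleaf :: "'c \<times> 'c \<Rightarrow> bool" and Csp :: nat and Cmb :: real and k :: nat
    and W :: "'c \<Rightarrow> 'c \<Rightarrow> 'c \<Rightarrow> nat"
  assumes ct: "is_binary_cluster_tree I rt sons label"
    and bt: "is_block_tree rt sons bleaf"
    and sp_row: "\<And>t. t \<in> clusters rt sons \<Longrightarrow> card {s. (t, s) \<in> blocks rt sons bleaf} \<le> Csp"
    and sp_col: "\<And>t. t \<in> clusters rt sons \<Longrightarrow> card {s. (s, t) \<in> blocks rt sons bleaf} \<le> Csp"
    and Cmb_nonneg: "0 \<le> Cmb"
    and W_leaf: "\<And>t s r. (t, s) \<in> blocks rt sons bleaf \<Longrightarrow> (s, r) \<in> blocks rt sons bleaf \<Longrightarrow>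
        bleaf (t, s) \<or> bleaf (s, r) \<Longrightarrow>
        real (W t s r) \<le> Cmb * real k ^ 2 * real (card (label t) + card (label s) + card (label r))"
    and W_rec: "\<And>t s r. (t, s) \<in> blocks rt sons bleaf \<Longrightarrow> (s, r) \<in> blocks rt sons bleaf \<Longrightarrow>
        \<not> bleaf (t, s) \<Longrightarrow> \<not> bleaf (s, r) \<Longrightarrow>
        real (W t s r) \<le> Cmb * real k ^ 2 * real (card (label t) + card (label s) + card (label r))
          + (\<Sum>t'\<in>sonsp sons t. \<Sum>s'\<in>sonsp sons s. \<Sum>r'\<in>sonsp sons r. real (W t' s' r'))"
  shows "\<forall>(t0, s0, r0) \<in> triples rt sons bleaf.
    real (W t0 s0 r0) \<le> (real Csp ^ 2 * Cmb) * real k ^ 2 * real (cluster_depth rt sons + 1)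
       * real (card (label t0) + card (label s0) + card (label r0))"
proof -
  interpret L I rt sons label bleaf using ct bt by (simp add: L_def)
  show ?thesis
  proof (intro ballI, clarify)
    fix t0 s0 r0 assume x0: "(t0, s0, r0) \<in> T"
    obtain n0 where tx0: "tat rt sons bleaf n0 (t0, s0, r0)" using T_tat x0 by blast
    define D where "D = cluster_depth rt sons"
    define S where "S = SS sons bleaf (t0, s0, r0)"
    define c where "c = (\<lambda>x. Cmb * real k ^ 2 * real (card (label (fst x)) + card (label (fst (snd x))) + card (label (snd (snd x)))))"
    define N where "N = card (label t0) + card (label s0) + card (label r0)"
    have finS: "\<And>j. finite (S j)" using SS_fin x0 S_def by blast
    have ST: "\<And>j. S j \<subseteq> T" using SS_T x0 S_def by blast
    have onex: "real (W t s r) \<le> c (t, s, r) + (\<Sum>y\<in>ch sons bleaf (t, s, r). real (W (fst y) (fst (snd y)) (snd (snd y))))"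
      if xT: "(t, s, r) \<in> T" for t s r
    proof -
      have bl: "(t, s) \<in> B" "(s, r) \<in> B" using triples_blocks xT by blast+
      show ?thesis
      proof (cases "\<not> bleaf (t, s) \<and> \<not> bleaf (s, r)")
        case True
        have eq: "(\<Sum>t'\<in>sonsp sons t. \<Sum>s'\<in>sonsp sons s. \<Sum>r'\<in>sonsp sons r. real (W t' s' r'))
          = (\<Sum>y\<in>sonsp sons t \<times> sonsp sons s \<times> sonsp sons r. real (W (fst y) (fst (snd y)) (snd (snd y))))"
          by (simp add: sum.cartesian_product split_def)
        show ?thesis using W_rec[OF bl] True eq by (simp add: ch_def c_def)
      next
        case False
        then have "ch sons bleaf (t, s, r) = {}" unfolding ch_def by auto
        then show ?thesis using W_leaf[OF bl] False by (simp add: c_def)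
      qed
    qed
    let ?W = "\<lambda>y. real (W (fst y) (fst (snd y)) (snd (snd y)))"
    have step: "(\<Sum>x\<in>S j. ?W x) \<le> (\<Sum>x\<in>S j. c x) + (\<Sum>x\<in>S (Suc j). ?W x)" for j
    proof -
      have "(\<Sum>x\<in>S j. ?W x) \<le> (\<Sum>x\<in>S j. c x + (\<Sum>y\<in>ch sons bleaf x. ?W y))"
      proof (rule sum_mono)
        fix x assume "x \<in> S j"
        then have "x \<in> T" using ST by blast
        then show "?W x \<le> c x + (\<Sum>y\<in>ch sons bleaf x. ?W y)" using onex by (cases x) auto
      qed
      also have "\<dots> = (\<Sum>x\<in>S j. c x) + (\<Sum>x\<in>S j. \<Sum>y\<in>ch sons bleaf x. ?W y)" by (simp add: sum.distrib)
      also have "(\<Sum>x\<in>S j. \<Sum>y\<in>ch sons bleaf x. ?W y) = (\<Sum>x\<in>S (Suc j). ?W x)"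
      proof -
        have "(\<Sum>x\<in>S (Suc j). ?W x) = sum ?W (\<Union>(ch sons bleaf ` S j))" by (simp add: S_def)
        also have "\<dots> = (\<Sum>x\<in>S j. \<Sum>y\<in>ch sons bleaf x. ?W y)"
        proof (rule sum.UNION_disjoint[OF finS])
          show "\<forall>i\<in>S j. finite (ch sons bleaf i)" using ch_fin ST by blast
          show "\<forall>i\<in>S j. \<forall>ja\<in>S j. i \<noteq> ja \<longrightarrow> ch sons bleaf i \<inter> ch sons bleaf ja = {}"
            using ch_disj SS_tat[OF tx0] S_def by blast
        qed
        finally show ?thesis by simp
      qed
      finally show ?thesis .
    qed
    have acc: "real (W t0 s0 r0) \<le> (\<Sum>j\<le>m. \<Sum>x\<in>S j. c x) + (\<Sum>x\<in>S (Suc m). ?W x)" for m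
    proof (induction m)
      case 0
      then show ?case using step[of 0] by (simp add: S_def)
    next
      case (Suc m)
      then show ?case using step[of "Suc m"] by simp
    qed
    have empty: "S (Suc D) = {}"
    proof (rule ccontr)
      assume "S (Suc D) \<noteq> {}"
      then obtain x where "x \<in> S (Suc D)" by blast
      then have "tat rt sons bleaf (n0 + Suc D) x" using SS_tat[OF tx0] S_def by blast
      then show False using tat_depth D_def by fastforce
    qed
    have lvl: "(\<Sum>x\<in>S j. c x) \<le> Cmb * real k ^ 2 * (real Csp ^ 2 * real N)" for j
    proof -
      have "(\<Sum>x\<in>S j. c x) = Cmb * real k ^ 2 * real (\<Sum>x\<in>S j. card (label (fst x)) + card (label (fst (snd x))) + card (label (snd (snd x))))"
        by (simp add: c_def sum_distrib_left)
      also have "\<dots> \<le> Cmb * real k ^ 2 * real (Csp^2 * N)"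
      proof (rule mult_left_mono)
        show "real (\<Sum>x\<in>S j. card (label (fst x)) + card (label (fst (snd x))) + card (label (snd (snd x)))) \<le> real (Csp^2 * N)"
          using level_bound[OF sp_row sp_col x0, of j] unfolding S_def N_def of_nat_le_iff .
        show "0 \<le> Cmb * real k ^ 2" using Cmb_nonneg by simp
      qed
      finally show ?thesis by simp
    qed
    have "real (W t0 s0 r0) \<le> (\<Sum>j\<le>D. \<Sum>x\<in>S j. c x)" using acc[of D] empty by simp
    also have "\<dots> \<le> (\<Sum>j\<le>D. Cmb * real k ^ 2 * (real Csp ^ 2 * real N))" by (intro sum_mono lvl)
    also have "\<dots> = (real Csp ^ 2 * Cmb) * real k ^ 2 * real (D + 1) * real N" by (simp add: algebra_simps)
    finally show "real (W t0 s0 r0) \<le> (real Csp ^ 2 * Cmb) * real k ^ 2 * real (cluster_depth rt sons + 1)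
       * real (card (label t0) + card (label s0) + card (label r0))" unfolding D_def N_def .
  qed
qed

end
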